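(* Fix $1<p,q<\infty$ with $\frac1p+\frac1q=1$ and an integer $r>1$; let $s=r^{1/p}$, $M=\lfloor\log_2 r\rfloor$ and let $\alpha>0$ satisfy $\alpha^M=s$. Let $(x_n)_n\subseteq\mathcal N_\alpha$ be a block sequence such that $\alpha^{-3}\le\|J_mx_n\|_p\le 1$ for all $n,m\in\mathbb N$. Then for any $a_1,\dots,a_N\in\mathbb R$, $$\alpha^{-4p}\Big\|\sum_{n=1}^N a_nx_n\Big\|_p\le M^{1/p}\Big|\sum_{n=1}^N a_nx_n\Big|_{p,r}\le 6(p+q)\alpha^4\Big\|\sum_{n=1}^N a_nx_n\Big\|_p.$$
   Context: $c_{00}$ = finitely supported real sequences; a block sequence $(x_n)$ means $\max{\rm supp}\,x_n<\min{\rm supp}\,x_{n+1}$. For $\beta>0$ let $C_\beta=\{\pm\beta^j: j\in\mathbb Z\}\cup\{0\}$ and $\mathcal N_\beta=\{x\in c_{00}: x(i)\in C_\beta\ \forall i\}$. For $x\in\mathcal N_\alpha$ and $m\in\mathbb N$, $J_{m,x}=\{i\in{\rm supp}\,x: \alpha^{-m}x(i)\in C_s\}$ and $J_mx$ is the restriction of $x$ to $J_{m,x}$ (coordinates outside set to $0$). Let $K^{\mathcal M}_{q,r}$ be the smallest subset of $c_{00}$ containing all $\pm e_n$ and such that whenever $y_1,\dots,y_l\in K^{\mathcal M}_{q,r}$, $l\le r$, have pairwise disjoint supports, then $r^{-1/q}(y_1+\dots+y_l)\in K^{\mathcal M}_{q,r}$; $|x|_{p,r}=\sup\{\sum_i x(i)y(i):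 y\in K^{\mathcal M}_{q,r}\}$. *)

theory Defs
  imports Complex_Main
begin

definition supp :: "(nat \<Rightarrow> real) \<Rightarrow> nat set" where
  "supp x = {i. x i \<noteq> 0}"

definition c00 :: "(nat \<Rightarrow> real) set" where
  "c00 = {x. finite (supp x)}"

definition Cset :: "real \<Rightarrow> real set" where
  "Cset \<beta> = {v. \<exists>j::int. v = \<beta> powi j \<or> v = - (\<beta> powi j)} \<union> {0}"

definition Nset :: "real \<Rightarrow> (nat \<Rightarrow> real) set" where
  "Nset \<beta> = {x \<in> c00. \<forall>i. x i \<in> Cset \<beta>}"

definition Jidx :: "real \<Rightarrow> real \<Rightarrow> nat \<Rightarrow> (nat \<Rightarrow> real) \<Rightarrow> nat set" where
  "Jidx \<alpha> s m x = {i \<in> supp x. \<alpha> powi (- int m) * x i \<in> Cset s}"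

definition Jop :: "real \<Rightarrow> real \<Rightarrow> nat \<Rightarrow> (nat \<Rightarrow> real) \<Rightarrow> (nat \<Rightarrow> real)" where
  "Jop \<alpha> s m x = (\<lambda>i. if i \<in> Jidx \<alpha> s m x then x i else 0)"

definition block_seq :: "(nat \<Rightarrow> (nat \<Rightarrow> real)) \<Rightarrow> bool" where
  "block_seq xs \<longleftrightarrow> (\<forall>n\<ge>1. \<forall>i \<in> supp (xs n). \<forall>j \<in> supp (xs (Suc n)). i < j)"

definition unitvec :: "nat \<Rightarrow> (nat \<Rightarrow> real)" where
  "unitvec n = (\<lambda>i. if i = n then 1 else 0)"

inductive_set KM :: "real \<Rightarrow> nat \<Rightarrow> (nat \<Rightarrow> real) set" for q :: real and r :: nat where
  base_pos: "unitvec n \<in> KM q r"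
| base_neg: "(\<lambda>i. - unitvec n i) \<in> KM q r"
| comb: "\<lbrakk> \<forall>y\<in>set ys. y \<in> KM q r; 1 \<le> length ys; length ys \<le> r;
          \<forall>k<length ys. \<forall>l<length ys. k \<noteq> l \<longrightarrow> supp (ys ! k) \<inter> supp (ys ! l) = {} \<rbrakk>
        \<Longrightarrow> (\<lambda>i. real r powr (-1/q) * (\<Sum>y\<leftarrow>ys. y i)) \<in> KM q r"

definition pnorm :: "real \<Rightarrow> (nat \<Rightarrow> real) \<Rightarrow> real" where
  "pnorm p x = (\<Sum>i\<in>supp x. \<bar>x i\<bar> powr p) powr (1/p)"

text \<open>|x|_{p,r}, where q is the conjugate exponent of p (passed explicitly).\<close>
definition prnorm :: "real \<Rightarrow> nat \<Rightarrow> (nat \<Rightarrow> real) \<Rightarrow> real" where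
  "prnorm q r x = Sup {(\<Sum>i\<in>supp x. x i * y i) | y. y \<in> KM q r}"

end

theory Submission
  imports Defs
begin


lemma bins:
  fixes e :: "'a \<Rightarrow> nat" and R E k :: nat
  assumes "finite F" "R \<ge> 1"
  shows "(\<forall>i\<in>F. e i \<le> E) \<longrightarrow> (\<Sum>i\<in>F. R^(E - e i)) \<le> k * R^E \<longrightarrow>
     (\<exists>g. (\<forall>i\<in>F. g i < k) \<and> (\<forall>b<k. (\<Sum>i\<in>{i\<in>F. g i = b}. R^(E - e i)) \<le> R^E))"
  using assms(1)
proof (induction F rule: finite_ranking_induct[where f = e])
  case empty
  then show ?case by auto
next
  case (insert x S)
  show ?case
  proof (intro impI)
    assume h1: "\<forall>i\<in>insert x S. e i \<le> E" and h2: "(\<Sum>i\<in>insert x S. R^(E - e i)) \<le> k * R^E"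
    show "\<exists>g. (\<forall>i\<in>insert x S. g i < k) \<and> (\<forall>b<k. (\<Sum>i\<in>{i\<in>insert x S. g i = b}. R^(E - e i)) \<le> R^E)"
    proof (cases "x \<in> S")
      case True
      then have "insert x S = S" by auto
      then show ?thesis using insert h1 h2 by simp
    next
      case False
      have s2: "(\<Sum>i\<in>S. R^(E - e i)) \<le> k * R^E"
        using h2 False insert.hyps(1) by simp
      obtain g where g1: "\<forall>i\<in>S. g i < k" and g2: "\<forall>b<k. (\<Sum>i\<in>{i\<in>S. g i = b}. R^(E - e i)) \<le> R^E"
        using insert.IH h1 s2 by auto
      define v where "v = R^(E - e x)"
      have vpos: "v \<ge> 1" unfolding v_def using assms(2) by simp
      have dv: "v dvd R^(E - e i)" if "i \<in> S" for i
        unfolding v_def using insert.hyps(2)[OF that] by (intro le_imp_power_dvd) auto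
      have dvE: "v dvd R^E" unfolding v_def by (intro le_imp_power_dvd) auto
      have "\<exists>b<k. (\<Sum>i\<in>{i\<in>S. g i = b}. R^(E - e i)) < R^E"
      proof (rule ccontr)
        assume "\<not> ?thesis"
        then have "\<forall>b<k. (\<Sum>i\<in>{i\<in>S. g i = b}. R^(E - e i)) \<ge> R^E" by auto
        then have "(\<Sum>b<k. (\<Sum>i\<in>{i\<in>S. g i = b}. R^(E - e i))) \<ge> (\<Sum>b<k. R^E)"
          by (intro sum_mono) auto
        moreover have "(\<Sum>b<k. (\<Sum>i\<in>{i\<in>S. g i = b}. R^(E - e i))) = (\<Sum>i\<in>S. R^(E - e i))"
          using sum.group[of S "{..<k}" g "\<lambda>i. R^(E - e i)"] g1 insert.hyps(1)
          by (auto simp: image_subset_iff)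
        moreover have "(\<Sum>i\<in>insert x S. R^(E - e i)) = v + (\<Sum>i\<in>S. R^(E - e i))"
          using False insert.hyps(1) v_def by simp
        ultimately show False using h2 vpos by simp
      qed
      then obtain b where b1: "b < k" and b2: "(\<Sum>i\<in>{i\<in>S. g i = b}. R^(E - e i)) < R^E" by auto
      have "v dvd (\<Sum>i\<in>{i\<in>S. g i = b}. R^(E - e i))" by (intro dvd_sum) (auto intro: dv)
      then obtain c where c: "(\<Sum>i\<in>{i\<in>S. g i = b}. R^(E - e i)) = v * c" by (auto elim: dvdE)
      obtain c' where c': "R^E = v * c'" using dvE by (auto elim: dvdE)
      have "c < c'" using b2 c c' by simp
      then have "v * c + v \<le> v * c'" by (metis Suc_leI mult_Suc_right add.commute mult_le_mono2)
      then have b3: "(\<Sum>i\<in>{i\<in>S. g i = b}. R^(E - e i)) + v \<le> R^E" using c c' by simp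
      define g' where "g' = g(x := b)"
      have "\<forall>b'<k. (\<Sum>i\<in>{i\<in>insert x S. g' i = b'}. R^(E - e i)) \<le> R^E"
      proof (intro allI impI)
        fix b' assume "b' < k"
        show "(\<Sum>i\<in>{i\<in>insert x S. g' i = b'}. R^(E - e i)) \<le> R^E"
        proof (cases "b' = b")
          case True
          have "{i\<in>insert x S. g' i = b'} = insert x {i\<in>S. g i = b}"
            using True False by (auto simp: g'_def)
          then show ?thesis using b3 False insert.hyps(1) v_def by simp
        next
          case f2: False
          have "{i\<in>insert x S. g' i = b'} = {i\<in>S. g i = b'}"
            using f2 False by (auto simp: g'_def)
          then show ?thesis using g2 \<open>b' < k\<close> by simp
        qed
      qed
      moreover have "\<forall>i\<in>insert x S. g' i < k" using g1 b1 by (auto simp: g'_def)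
      ultimately show ?thesis by blast
    qed
  qed
qed


lemma supp_unit: "supp (unitvec n) = {n}" by (auto simp: supp_def unitvec_def)

lemma kraft_nat:
  fixes q :: real and r :: nat
  assumes r: "r > 1" and q: "q > 0"
  shows "\<forall>y e. finite (supp y) \<and> supp y \<noteq> {} \<and>
    (\<forall>i\<in>supp y. e i \<le> E \<and> \<bar>y i\<bar> = real r powr (- real (e i) / q)) \<and>
    (\<Sum>i\<in>supp y. r^(E - e i)) \<le> r^E \<longrightarrow> y \<in> KM q r"
proof (induction E)
  have single: "y \<in> KM q r" if fin: "finite (supp y)" and i: "i \<in> supp y" and ei: "e i = 0"
     and ab: "\<forall>i\<in>supp y. e i \<le> E \<and> \<bar>y i\<bar> = real r powr (- real (e i) / q)"
     and sm: "(\<Sum>i\<in>supp y. r^(E - e i)) \<le> r^E" for y i e E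
  proof -
    have "supp y = {i}"
    proof (rule ccontr)
      assume "supp y \<noteq> {i}"
      then obtain j where j: "j \<in> supp y" "j \<noteq> i" using i by auto
      have "(\<Sum>i\<in>{i,j}. r^(E - e i)) \<le> (\<Sum>i\<in>supp y. r^(E - e i))"
        using fin i j by (intro sum_mono2) auto
      moreover have "(\<Sum>i\<in>{i,j}. r^(E - e i)) = r^E + r^(E - e j)" using j ei by simp
      moreover have "r^(E - e j) > 0" using r by simp
      ultimately show False using sm by simp
    qed
    moreover have "\<bar>y i\<bar> = 1" using ab i ei using r by simp
    ultimately have "y = unitvec i \<or> y = (\<lambda>k. - unitvec i k)"
      by (auto simp: supp_def unitvec_def fun_eq_iff abs_if split: if_splits)
    then show ?thesis by (auto intro: KM.intros)
  qed
  {
    case 0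
    show ?case
    proof (intro allI impI)
      fix y :: "nat \<Rightarrow> real" and e :: "nat \<Rightarrow> nat"
      assume h: "finite (supp y) \<and> supp y \<noteq> {} \<and>
        (\<forall>i\<in>supp y. e i \<le> 0 \<and> \<bar>y i\<bar> = real r powr (- real (e i) / q)) \<and>
        (\<Sum>i\<in>supp y. r^(0 - e i)) \<le> r^0"
      then obtain i where "i \<in> supp y" by auto
      then show "y \<in> KM q r" using single[of y i e 0] h by auto
    qed
  next
    case (Suc E)
    show ?case
    proof (intro allI impI)
      fix y :: "nat \<Rightarrow> real" and e :: "nat \<Rightarrow> nat"
      assume h: "finite (supp y) \<and> supp y \<noteq> {} \<and>
        (\<forall>i\<in>supp y. e i \<le> Suc E \<and> \<bar>y i\<bar> = real r powr (- real (e i) / q)) \<and>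
        (\<Sum>i\<in>supp y. r^(Suc E - e i)) \<le> r^Suc E"
      show "y \<in> KM q r"
      proof (cases "\<exists>i\<in>supp y. e i = 0")
        case True
        then obtain i where "i \<in> supp y" "e i = 0" by auto
        then show ?thesis using single[of y i e "Suc E"] h by auto
      next
        case False
        define e' where "e' = (\<lambda>i. e i - 1)"
        have e1: "e i \<ge> 1" if "i \<in> supp y" for i using False that by force
        have fin: "finite (supp y)" using h by auto
        have "(\<Sum>i\<in>supp y. r^(E - e' i)) = (\<Sum>i\<in>supp y. r^(Suc E - e i))"
          by (intro sum.cong) (auto simp: e'_def dest: e1 intro!: arg_cong[where f="\<lambda>k. r^k"])
        also have "\<dots> \<le> r * r^E" using h by simp
        finally have "\<exists>g. (\<forall>i\<in>supp y. g i < r) \<and> (\<forall>b<r. (\<Sum>i\<in>{i\<in>supp y. g i = b}. r^(E - e' i)) \<le> r^E)"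
          using bins[OF fin, of r e' E r] h r by (auto simp: e'_def)
        then obtain g where g1: "\<forall>i\<in>supp y. g i < r"
          and g2: "\<forall>b<r. (\<Sum>i\<in>{i\<in>supp y. g i = b}. r^(E - e' i)) \<le> r^E" by auto
        define yb where "yb = (\<lambda>b i. if i \<in> supp y \<and> g i = b then real r powr (1/q) * y i else 0)"
        have rq: "real r powr (1/q) > 0" using r by simp
        have suppyb: "supp (yb b) = {i\<in>supp y. g i = b}" for b
          using rq by (auto simp: yb_def supp_def)
        have ybK: "yb b \<in> KM q r" if "b < r" "{i\<in>supp y. g i = b} \<noteq> {}" for b
        proof -
          have "\<forall>i\<in>supp (yb b). e' i \<le> E \<and> \<bar>yb b i\<bar> = real r powr (- real (e' i) / q)"
          proof
            fix i assume i: "i \<in> supp (yb b)"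
            then have iy: "i \<in> supp y" "g i = b" using suppyb by auto
            have "\<bar>yb b i\<bar> = real r powr (1/q) * real r powr (- real (e i) / q)"
              using iy h rq by (simp add: yb_def abs_mult)
            also have "\<dots> = real r powr (1/q + - real (e i) / q)" by (simp add: powr_add[symmetric])
            also have "1/q + - real (e i) / q = - real (e' i) / q"
              using e1[OF iy(1)] q by (simp add: e'_def of_nat_diff field_simps)
            finally show "e' i \<le> E \<and> \<bar>yb b i\<bar> = real r powr (- real (e' i) / q)"
              using h iy by (auto simp: e'_def)
          qed
          moreover have "finite (supp (yb b))" using fin suppyb by simp
          moreover have "(\<Sum>i\<in>supp (yb b). r^(E - e' i)) \<le> r^E" using g2 that suppyb by simp
          ultimately show ?thesis using Suc.IH suppyb that by blast
        qed
        define bs where "bs = filter (\<lambda>b. {i\<in>supp y. g i = b} \<noteq> {}) [0..<r]"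
        define ys where "ys = map yb bs"
        have dbs: "distinct bs" by (simp add: bs_def)
        have setbs: "set bs = {b. b < r \<and> {i\<in>supp y. g i = b} \<noteq> {}}" by (auto simp: bs_def)
        have c1: "\<forall>z\<in>set ys. z \<in> KM q r" using ybK setbs by (auto simp: ys_def)
        obtain i0 where i0: "i0 \<in> supp y" using h by auto
        have "g i0 \<in> set bs" using setbs i0 g1 by auto
        then have c2: "1 \<le> length ys" by (auto simp: ys_def Suc_le_eq)
        have c3: "length ys \<le> r" unfolding ys_def bs_def
          using length_filter_le[of _ "[0..<r]"] by simp
        have c4: "\<forall>k<length ys. \<forall>l<length ys. k \<noteq> l \<longrightarrow> supp (ys ! k) \<inter> supp (ys ! l) = {}"
        proof (intro allI impI)
          fix k l assume "k < length ys" "l < length ys" "k \<noteq> l"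
          then have "bs ! k \<noteq> bs ! l" using dbs by (simp add: ys_def nth_eq_iff_index_eq)
          then show "supp (ys ! k) \<inter> supp (ys ! l) = {}"
            using \<open>k < length ys\<close> \<open>l < length ys\<close> by (auto simp: ys_def suppyb)
        qed
        have "(\<lambda>i. real r powr (-1/q) * (\<Sum>z\<leftarrow>ys. z i)) \<in> KM q r"
          using KM.comb[OF c1 c2 c3 c4] .
        moreover have "(\<lambda>i. real r powr (-1/q) * (\<Sum>z\<leftarrow>ys. z i)) = y"
        proof
          fix i
          have "(\<Sum>z\<leftarrow>ys. z i) = (\<Sum>b\<in>set bs. yb b i)"
            unfolding ys_def using dbs by (simp add: sum_list_distinct_conv_sum_set comp_def)
          also have "\<dots> = (if i \<in> supp y then real r powr (1/q) * y i else 0)"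
          proof (cases "i \<in> supp y")
            case True
            then have gi: "g i \<in> set bs" using setbs g1 by auto
            have "(\<Sum>b\<in>set bs. yb b i) = yb (g i) i"
              using gi by (intro sum.remove[THEN trans]) (auto simp: yb_def intro!: sum.neutral)
            then show ?thesis using True by (simp add: yb_def)
          next
            case False
            then show ?thesis by (auto simp: yb_def)
          qed
          finally show "real r powr (-1/q) * (\<Sum>z\<leftarrow>ys. z i) = y i"
            using r by (auto simp: supp_def powr_add[symmetric])
        qed
        ultimately show ?thesis by simp
      qed
    qed
  }
qed


lemma kraft_real:
  fixes q :: real and r :: nat and e :: "nat \<Rightarrow> nat"
  assumes r: "r > 1" and q: "q > 0" and fin: "finite (supp y)" and ne: "supp y \<noteq> {}"
    and ab: "\<forall>i\<in>supp y. \<bar>y i\<bar> = real r powr (- real (e i) / q)"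
    and sm: "(\<Sum>i\<in>supp y. real r powr (- real (e i))) \<le> 1"
  shows "y \<in> KM q r"
proof -
  define E where "E = Max (e ` supp y)"
  have eE: "e i \<le> E" if "i \<in> supp y" for i using fin that by (auto simp: E_def)
  have rr: "real (r^(E - e i)) = real r ^ E * real r powr (- real (e i))" if "i \<in> supp y" for i
  proof -
    have "real (r^(E - e i)) = real r powr (real E - real (e i))"
      using r eE[OF that] by (simp add: powr_realpow[symmetric] of_nat_diff)
    also have "\<dots> = real r powr real E * real r powr (- real (e i))"
      by (simp add: powr_add[symmetric])
    finally show ?thesis using r by (simp add: powr_realpow)
  qed
  have "real (\<Sum>i\<in>supp y. r^(E - e i)) = (\<Sum>i\<in>supp y. real (r^(E - e i)))"
    by (simp only: of_nat_sum)
  also have "\<dots> = (\<Sum>i\<in>supp y. real r ^ E * real r powr (- real (e i)))"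
    by (intro sum.cong refl rr)
  also have "\<dots> = real r ^ E * (\<Sum>i\<in>supp y. real r powr (- real (e i)))"
    by (simp add: sum_distrib_left)
  also have "\<dots> \<le> real r ^ E" using sm r by (simp add: mult_left_le)
  finally have "real (\<Sum>i\<in>supp y. r^(E - e i)) \<le> real (r^E)" by simp
  then have "(\<Sum>i\<in>supp y. r^(E - e i)) \<le> r^E" by (simp only: of_nat_le_iff)
  then show ?thesis using kraft_nat[OF r q, of E] fin ne ab eE by blast
qed

lemma KM_props:
  fixes q :: real and r :: nat
  assumes r: "r > 1" and q: "q > 0" and y: "y \<in> KM q r"
  shows "finite (supp y) \<and> (\<forall>i\<in>supp y. \<exists>d::nat. \<bar>y i\<bar> = real r powr (- real d / q))
         \<and> (\<Sum>i\<in>supp y. \<bar>y i\<bar> powr q) \<le> 1"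
  using y
proof (induction rule: KM.induct)
  case (base_pos n)
  have "unitvec n n = 1" by (simp add: unitvec_def)
  then show ?case using r by (simp add: supp_unit exI[of _ 0])
next
  case (base_neg n)
  have "supp (\<lambda>i. - unitvec n i) = {n}" by (auto simp: supp_def unitvec_def)
  then show ?case using r by (auto simp: unitvec_def intro: exI[of _ 0])
next
  case (comb ys)
  define l where "l = length ys"
  define Y where "Y = (\<lambda>k. ys ! k)"
  have YP: "finite (supp (Y k)) \<and> (\<forall>i\<in>supp (Y k). \<exists>d::nat. \<bar>Y k i\<bar> = real r powr (- real d / q))
         \<and> (\<Sum>i\<in>supp (Y k). \<bar>Y k i\<bar> powr q) \<le> 1" if "k < l" for k
    using comb.IH that by (auto simp: Y_def l_def)
  have disj: "supp (Y k) \<inter> supp (Y k') = {}" if "k < l" "k' < l" "k \<noteq> k'" for k k'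
    using comb.hyps(3) that by (auto simp: Y_def l_def)
  define c where "c = real r powr (-1/q)"
  have cpos: "c > 0" using r by (simp add: c_def)
  define z where "z = (\<lambda>i. c * (\<Sum>y\<leftarrow>ys. y i))"
  have zsum: "z i = c * (\<Sum>k<l. Y k i)" for i
    unfolding z_def Y_def l_def
    by (simp add: sum_list_sum_nth atLeast0LessThan)
  have zval: "z i = c * Y k i" if "k < l" "i \<in> supp (Y k)" for i k
  proof -
    have "\<forall>k'\<in>{..<l} - {k}. Y k' i = 0"
    proof
      fix k' assume "k' \<in> {..<l} - {k}"
      then have "i \<notin> supp (Y k')" using disj[of k k'] that by auto
      then show "Y k' i = 0" by (simp add: supp_def)
    qed
    then have "(\<Sum>k'<l. Y k' i) = Y k i"
      using that by (intro sum.remove[THEN trans]) (auto intro!: sum.neutral)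
    then show ?thesis using zsum by simp
  qed
  have zzero: "z i = 0" if "\<forall>k<l. i \<notin> supp (Y k)" for i
    using that by (simp add: zsum supp_def)
  have suppz: "supp z = (\<Union>k<l. supp (Y k))"
  proof
    show "supp z \<subseteq> (\<Union>k<l. supp (Y k))" using zzero by (auto simp: supp_def)
    show "(\<Union>k<l. supp (Y k)) \<subseteq> supp z" using zval cpos by (auto simp: supp_def)
  qed
  have finz: "finite (supp z)" using suppz YP by auto
  have dz: "\<forall>i\<in>supp z. \<exists>d::nat. \<bar>z i\<bar> = real r powr (- real d / q)"
  proof
    fix i assume "i \<in> supp z"
    then obtain k where k: "k < l" "i \<in> supp (Y k)" using suppz by auto
    then obtain d :: nat where d: "\<bar>Y k i\<bar> = real r powr (- real d / q)" using YP by blast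
    have "\<bar>z i\<bar> = c * \<bar>Y k i\<bar>" using zval[OF k] cpos by (simp add: abs_mult)
    also have "\<dots> = real r powr (- real (Suc d) / q)" using d q
      by (simp add: c_def powr_add[symmetric] field_simps)
    finally show "\<exists>d::nat. \<bar>z i\<bar> = real r powr (- real d / q)" by blast
  qed
  have "(\<Sum>i\<in>supp z. \<bar>z i\<bar> powr q) = (\<Sum>k<l. \<Sum>i\<in>supp (Y k). \<bar>z i\<bar> powr q)"
    unfolding suppz using YP disj by (intro sum.UNION_disjoint) auto
  also have "\<dots> = (\<Sum>k<l. \<Sum>i\<in>supp (Y k). (1 / real r) * \<bar>Y k i\<bar> powr q)"
  proof (intro sum.cong refl)
    fix k i assume "k \<in> {..<l}" "i \<in> supp (Y k)"
    then have "\<bar>z i\<bar> powr q = (c * \<bar>Y k i\<bar>) powr q" using zval cpos by (simp add: abs_mult)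
    also have "\<dots> = c powr q * \<bar>Y k i\<bar> powr q" using cpos by (simp add: powr_mult)
    also have "c powr q = 1 / real r" using q r
      by (simp add: c_def powr_powr powr_minus[symmetric])
    finally show "\<bar>z i\<bar> powr q = (1 / real r) * \<bar>Y k i\<bar> powr q" .
  qed
  also have "\<dots> = (1 / real r) * (\<Sum>k<l. \<Sum>i\<in>supp (Y k). \<bar>Y k i\<bar> powr q)"
    by (simp add: sum_distrib_left)
  also have "\<dots> \<le> (1 / real r) * (\<Sum>k<l. 1)"
    using YP r by (intro mult_left_mono sum_mono) auto
  also have "\<dots> \<le> 1" using comb.hyps(2) r by (simp add: l_def)
  finally show ?case using finz dz unfolding z_def c_def by blast
qed



lemma pc:
  fixes \<alpha> p q c :: real and j :: int and d M :: nat
  assumes a: "\<alpha> > 1" and p: "p > 1" and q: "q > 1" and pq: "1/p + 1/q = 1" and M: "M > 0"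
  shows "\<alpha> powr (real_of_int j - p * M * d / q)
    \<le> \<alpha> powr (p * j - p * (c + real_of_int ((j - \<lceil>c\<rceil>) mod int M)) / q) + \<alpha> powr (c - p * M * d)"
proof -
  have pq1: "p / q = p - 1" using pq p q by (simp add: field_simps)
  define \<tau> where "\<tau> = (j - \<lceil>c\<rceil>) mod int M"
  show ?thesis
  proof (cases "real_of_int j + real M * real d > c")
    case True
    define e where "e = j + int M * int d - \<lceil>c\<rceil>"
    have "\<lceil>c\<rceil> \<le> j + int M * int d" using True by (simp add: ceiling_le_iff less_imp_le)
    then have e0: "e \<ge> 0" by (simp add: e_def)
    have "e = (j - \<lceil>c\<rceil>) + int d * int M" by (simp add: e_def)
    then have "e mod int M = \<tau>" unfolding \<tau>_def by (simp only: mod_mult_self1)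
    then have "\<tau> \<le> e" using e0 M by (metis zmod_le_nonneg_dividend)
    then have "real_of_int \<tau> \<le> real_of_int e" by (simp only: of_int_le_iff)
    also have "real_of_int e = real_of_int j + real M * real d - real_of_int \<lceil>c\<rceil>" by (simp add: e_def)
    finally have "real_of_int \<tau> \<le> real_of_int j + real M * real d - c"
      using le_of_int_ceiling[of c] by linarith
    then have "real_of_int j - p * M * d / q \<le> p * j - p * (c + real_of_int \<tau>) / q"
    proof -
      assume h: "real_of_int \<tau> \<le> real_of_int j + real M * real d - c"
      have "p * j - p * (c + real_of_int \<tau>) / q - (real_of_int j - p * M * d / q)
          = (p/q) * (real_of_int j + real M * real d - c - real_of_int \<tau>) + (p - 1 - p/q) * j"
        using q by (simp add: field_simps)
      also have "\<dots> = (p/q) * (real_of_int j + real M * real d - c - real_of_int \<tau>)" using pq1 by simp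
      also have "\<dots> \<ge> 0" using h p q by simp
      finally show ?thesis by simp
    qed
    then have "\<alpha> powr (real_of_int j - p * M * d / q) \<le> \<alpha> powr (p * j - p * (c + real_of_int \<tau>) / q)"
      using a by simp
    then show ?thesis unfolding \<tau>_def by (smt (verit) powr_ge_zero)
  next
    case False
    have "c - p * M * d - (real_of_int j - p * M * d / q) = c - j - (p - p/q) * M * d"
      using q by (simp add: field_simps)
    also have "\<dots> = c - j - M * d" using pq1 by simp
    finally have "real_of_int j - p * M * d / q \<le> c - p * M * d" using False by simp
    then have "\<alpha> powr (real_of_int j - p * M * d / q) \<le> \<alpha> powr (c - p * M * d)" using a by simp
    then show ?thesis by (smt (verit) powr_ge_zero)
  qed
qed


lemma class_lemma:
  fixes \<alpha> v s :: real and j :: int and M m :: nat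
  assumes a: "\<alpha> > 1" and M: "M > 0" and s: "s = \<alpha> ^ M" and v: "\<bar>v\<bar> = \<alpha> powr real_of_int j"
  shows "(\<alpha> powi (- int m) * v \<in> Cset s) \<longleftrightarrow> int M dvd (j - int m)"
proof -
  have a0: "\<alpha> > 0" "\<alpha> \<noteq> 1" using a by auto
  have pw: "\<alpha> powi k = \<alpha> powr real_of_int k" for k using a0 by (simp add: powr_real_of_int')
  have spw: "s powi k = \<alpha> powr real_of_int (int M * k)" for k
  proof -
    have "s powi k = \<alpha> powi (int M * k)" unfolding s by (simp add: power_int_mult power_int_of_nat)
    then show ?thesis by (simp only: pw)
  qed
  have w: "\<alpha> powi (- int m) * \<bar>v\<bar> = \<alpha> powr real_of_int (j - int m)"
    using v by (simp add: pw powr_add[symmetric])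
  have pos: "\<alpha> powr x > 0" for x using a0 by simp
  have absW: "\<bar>\<alpha> powi (- int m) * v\<bar> = \<alpha> powr real_of_int (j - int m)"
    using w a0 by (simp add: abs_mult)
  have "(\<alpha> powi (- int m) * v \<in> Cset s) \<longleftrightarrow> (\<exists>k::int. \<alpha> powr real_of_int (j - int m) = \<alpha> powr real_of_int (int M * k))"
  proof
    assume "\<alpha> powi (- int m) * v \<in> Cset s"
    then obtain k where kk: "\<alpha> powi (- int m) * v = s powi k \<or> \<alpha> powi (- int m) * v = - (s powi k) \<or> \<alpha> powi (- int m) * v = 0"
      unfolding Cset_def by auto
    have "\<bar>s powi k\<bar> = s powi k" using spw pos by simp
    then have "\<alpha> powr real_of_int (j - int m) = s powi k"
      using kk absW pos[of "real_of_int (j - int m)"] by auto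
    then show "\<exists>k::int. \<alpha> powr real_of_int (j - int m) = \<alpha> powr real_of_int (int M * k)"
      unfolding spw by blast
  next
    assume "\<exists>k::int. \<alpha> powr real_of_int (j - int m) = \<alpha> powr real_of_int (int M * k)"
    then obtain k where k: "\<alpha> powr real_of_int (j - int m) = \<alpha> powr real_of_int (int M * k)" by auto
    have "\<alpha> powi (- int m) * v = s powi k \<or> \<alpha> powi (- int m) * v = - (s powi k)"
    proof (cases "v = \<bar>v\<bar>")
      case True
      then have "\<alpha> powi (- int m) * v = s powi k" using w k spw by simp
      then show ?thesis by simp
    next
      case False
      then have "v = - \<bar>v\<bar>" by linarith
      then have "\<alpha> powi (- int m) * v = - (\<alpha> powi (- int m) * \<bar>v\<bar>)" by simp
      then have "\<alpha> powi (- int m) * v = - (s powi k)" using w k spw by simp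
      then show ?thesis by simp
    qed
    then show "\<alpha> powi (- int m) * v \<in> Cset s" unfolding Cset_def by auto
  qed
  also have "\<dots> \<longleftrightarrow> (\<exists>k::int. j - int m = int M * k)"
    by (simp only: powr_inj[OF a0] of_int_eq_iff)
  also have "\<dots> \<longleftrightarrow> int M dvd (j - int m)" by (auto simp: dvd_def)
  finally show ?thesis .
qed


lemma geo_bound:
  fixes \<alpha> p q :: real and M :: nat
  assumes a: "\<alpha> powr p \<ge> 2" and q: "q > 1" and a1: "\<alpha> > 1"
  shows "(\<Sum>k<M. \<alpha> powr (- p * real k / q)) \<le> 1 + 2 * q"
proof -
  define \<theta> where "\<theta> = \<alpha> powr (- p / q)"
  have th: "\<alpha> powr (- p * real k / q) = \<theta> ^ k" for k
  proof -
    have "\<theta> ^ k = \<alpha> powr (- p / q * real k)" using a1 by (simp add: \<theta>_def powr_realpow[symmetric] powr_powr)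
    then show ?thesis by (simp add: mult.commute)
  qed
  have "\<theta> = (\<alpha> powr p) powr (- 1 / q)" using a1 by (simp add: \<theta>_def powr_powr)
  also have "\<dots> \<le> 2 powr (-1/q)" using a q by (intro powr_mono2') auto
  finally have th2: "\<theta> \<le> 2 powr (-1/q)" .
  define u where "u = ln 2 / q"
  have e12: "exp (1/2) \<le> (2::real)"
  proof (rule ccontr)
    assume "\<not> exp (1/2) \<le> (2::real)"
    then have "2 * 2 < exp (1/2) * exp (1/2::real)" by (intro mult_strict_mono) auto
    also have "exp (1/2) * exp (1/2) = exp (1::real)" by (simp flip: exp_add)
    also have "\<dots> \<le> 3" by (rule exp_le)
    finally show False by simp
  qed
  have ln2: "ln 2 \<ge> (1/2::real)"
  proof -
    have "ln (exp (1/2)) \<le> ln (2::real)" using e12 by (subst ln_le_cancel_iff) auto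
    then show ?thesis by simp
  qed
  have u0: "u > 0" using q ln2 unfolding u_def by simp
  have "2 powr (-1/q) = exp (- u)" by (simp add: powr_def u_def)
  also have "\<dots> = 1 / exp u" by (simp add: exp_minus divide_inverse)
  also have "\<dots> \<le> 1 / (1 + u)"
  proof -
    have "1 + u \<le> exp u" by (rule exp_ge_add_one_self)
    then show ?thesis using u0 by (intro divide_left_mono) auto
  qed
  finally have th3: "\<theta> \<le> 1 / (1 + u)" using th2 by simp
  have thpos: "\<theta> > 0" using a1 by (simp add: \<theta>_def)
  have thl1: "\<theta> < 1"
  proof -
    have "1 / (1 + u) < 1" using u0 by simp
    then show ?thesis using th3 by simp
  qed
  have "(\<Sum>k<M. \<alpha> powr (- p * real k / q)) = (\<Sum>k<M. \<theta> ^ k)" by (rule sum.cong[OF refl th])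
  also have "\<dots> \<le> 1 / (1 - \<theta>)" using geometric_sum_less[OF thpos thl1, of "{..<M}"] by simp
  also have "\<dots> \<le> 1 / (1 - 1 / (1 + u))"
  proof -
    have "1 - 1 / (1 + u) \<le> 1 - \<theta>" using th3 by simp
    moreover have "0 < 1 - 1 / (1 + u)" using u0 by simp
    ultimately show ?thesis by (intro divide_left_mono) auto
  qed
  also have "1 / (1 - 1 / (1 + u)) = 1 + 1 / u"
  proof -
    have "1 - 1 / (1 + u) = u / (1 + u)" using u0 by (simp add: field_simps)
    then show ?thesis using u0 by (simp add: field_simps)
  qed
  also have "1 / u = q / ln 2" by (simp add: u_def)
  also have "q / ln 2 \<le> 2 * q"
  proof -
    have "q / ln 2 \<le> q / (1/2)" using ln2 q by (intro divide_left_mono) auto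
    then show ?thesis by simp
  qed
  finally show ?thesis by simp
qed



definition cls :: "nat \<Rightarrow> int \<Rightarrow> nat" where
  "cls M j = nat ((j - 1) mod int M) + 1"

lemma cls_props:
  assumes "M > 0"
  shows "1 \<le> cls M j" "cls M j \<le> M" "int M dvd (j - int (cls M j))"
proof -
  have "0 \<le> (j - 1) mod int M" "(j - 1) mod int M < int M" using assms by auto
  then show "1 \<le> cls M j" "cls M j \<le> M" by (auto simp: cls_def)
  have "int (cls M j) = (j - 1) mod int M + 1" using assms by (simp add: cls_def)
  then have "j - int (cls M j) = (j - 1) - (j - 1) mod int M" by simp
  also have "\<dots> = int M * ((j - 1) div int M)" by (simp add: minus_mod_eq_mult_div)
  finally show "int M dvd (j - int (cls M j))" by simp
qed

lemma dvd_same_class: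
  assumes "m \<in> {1..M}" "m' \<in> {1..M}" "int M dvd (j - int m)" "int M dvd (j - int m')"
  shows "m = m'"
proof (rule ccontr)
  assume ne: "m \<noteq> m'"
  have "int M dvd (int m' - int m)" using assms(3,4) dvd_diff by fastforce
  then have "\<bar>int M\<bar> \<le> \<bar>int m' - int m\<bar>" using ne by (intro dvd_imp_le_int) auto
  then show False using assms(1,2) by auto
qed

lemma cls_iff:
  assumes "M > 0" "m \<in> {1..M}"
  shows "int M dvd (j - int m) \<longleftrightarrow> cls M j = m"
  using cls_props[OF assms(1), of j] dvd_same_class[OF assms(2), of "cls M j" j] by auto



theorem mainTheorem5:
  fixes p q \<alpha> :: real and r M N :: nat
    and xs :: "nat \<Rightarrow> (nat \<Rightarrow> real)" and a :: "nat \<Rightarrow> real"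
  assumes "1 < p" and "1 < q" and "1/p + 1/q = 1"
    and "r > 1"
    and "M = nat \<lfloor>log 2 (real r)\<rfloor>"
    and "\<alpha> > 0" and "\<alpha> ^ M = real r powr (1/p)"
    and "\<forall>n\<ge>1. xs n \<in> Nset \<alpha>"
    and "block_seq xs"
    and "\<forall>n\<ge>1. \<forall>m\<ge>1. \<alpha> powr (-3) \<le> pnorm p (Jop \<alpha> (real r powr (1/p)) m (xs n))
                          \<and> pnorm p (Jop \<alpha> (real r powr (1/p)) m (xs n)) \<le> 1"
  shows "\<alpha> powr (-4*p) * pnorm p (\<lambda>i. \<Sum>n=1..N. a n * xs n i)
           \<le> real M powr (1/p) * prnorm q r (\<lambda>i. \<Sum>n=1..N. a n * xs n i)
       \<and> real M powr (1/p) * prnorm q r (\<lambda>i. \<Sum>n=1..N. a n * xs n i)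
           \<le> 6 * (p + q) * \<alpha> ^ 4 * pnorm p (\<lambda>i. \<Sum>n=1..N. a n * xs n i)"
proof -
  note p = assms(1) and q = assms(2) and pq = assms(3) and r = assms(4) and Mdef = assms(5)
    and a0 = assms(6) and aM = assms(7) and Nx = assms(8) and bl = assms(9) and Jh = assms(10)
  define s where "s = real r powr (1/p)"
  have pq1: "p / q = p - 1" using pq p q by (simp add: field_simps)
  have r2: "real r \<ge> 2" using r by simp
  have lg: "log 2 (real r) \<ge> 1" using r2 by simp
  have M1: "M \<ge> 1" using lg Mdef by linarith
  have M0: "M > 0" using M1 by simp
  have "real M \<le> log 2 (real r)" using Mdef lg by linarith
  then have "2 powr real M \<le> 2 powr log 2 (real r)" by simp
  then have r2M: "2 ^ M \<le> real r" using r2 by (simp add: powr_realpow)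
  have s1: "s > 1" using r2 p by (simp add: s_def)
  have a1: "\<alpha> > 1"
  proof (rule ccontr)
    assume "\<not> \<alpha> > 1"
    then have "\<alpha> ^ M \<le> 1" using a0 by (intro power_le_one) auto
    then show False using aM s1 s_def by simp
  qed
  have rpow: "\<alpha> powr (p * real M) = real r"
  proof -
    have "\<alpha> powr (p * real M) = (\<alpha> powr real M) powr p" by (simp add: powr_powr mult.commute)
    also have "\<alpha> powr real M = \<alpha> ^ M" using a0 by (simp add: powr_realpow)
    also have "\<alpha> ^ M = real r powr (1/p)" using aM by simp
    finally have "\<alpha> powr (p * real M) = (real r powr (1/p)) powr p" .
    also have "\<dots> = real r" using p by (simp add: powr_powr)
    finally show ?thesis .
  qed
  have ap2: "\<alpha> powr p \<ge> 2"
  proof -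
    have "(\<alpha> powr p) ^ M = \<alpha> powr (p * real M)"
      using a0 by (simp add: powr_realpow[symmetric] powr_powr)
    then have "2 ^ M \<le> (\<alpha> powr p) ^ M" using rpow r2M by simp
    then show ?thesis using M0 power_le_imp_le_base[of 2 "M-1" "\<alpha> powr p"] by simp
  qed
  have sM: "s = \<alpha> ^ M" using aM s_def by simp
  have jx: "\<exists>j::int. \<bar>xs n i\<bar> = \<alpha> powr real_of_int j" if "n \<ge> 1" "i \<in> supp (xs n)" for n i
  proof -
    have "xs n i \<in> Cset \<alpha>" using Nx that by (auto simp: Nset_def)
    moreover have "xs n i \<noteq> 0" using that by (simp add: supp_def)
    ultimately obtain j :: int where "xs n i = \<alpha> powi j \<or> xs n i = - (\<alpha> powi j)"
      unfolding Cset_def by auto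
    moreover have "\<alpha> powi j = \<alpha> powr real_of_int j" using a0 by (simp add: powr_real_of_int')
    moreover have "\<alpha> powr real_of_int j > 0" using a0 by simp
    ultimately show ?thesis by auto
  qed
  define jj where "jj n i = (SOME j::int. \<bar>xs n i\<bar> = \<alpha> powr real_of_int j)" for n i
  have jjp: "\<bar>xs n i\<bar> = \<alpha> powr real_of_int (jj n i)" if "n \<ge> 1" "i \<in> supp (xs n)" for n i
    unfolding jj_def using someI_ex[OF jx[OF that]] .
  have finx: "finite (supp (xs n))" if "n \<ge> 1" for n using Nx that by (auto simp: Nset_def c00_def)
  have Jid: "Jidx \<alpha> s m (xs n) = {i\<in>supp (xs n). int M dvd (jj n i - int m)}" if "n \<ge> 1" for n m
    unfolding Jidx_def using class_lemma[OF a1 M0 sM jjp[OF that]] by auto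
  define P where "P n m = (\<Sum>i\<in>Jidx \<alpha> s m (xs n). \<bar>xs n i\<bar> powr p)" for n m
  have Pb: "\<alpha> powr (-3 * p) \<le> P n m \<and> P n m \<le> 1" if "n \<ge> 1" "m \<ge> 1" for n m
  proof -
    have "supp (Jop \<alpha> s m (xs n)) = Jidx \<alpha> s m (xs n)"
      by (auto simp: Jop_def Jidx_def supp_def)
    then have pn: "pnorm p (Jop \<alpha> s m (xs n)) = P n m powr (1/p)"
      by (simp add: pnorm_def P_def Jop_def)
    have P0: "P n m \<ge> 0" by (simp add: P_def sum_nonneg)
    have h: "\<alpha> powr (-3) \<le> P n m powr (1/p) \<and> P n m powr (1/p) \<le> 1" using Jh that pn s_def by metis
    have "P n m = (P n m powr (1/p)) powr p" using P0 p by (simp add: powr_powr)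
    moreover have "(\<alpha> powr (-3)) powr p \<le> (P n m powr (1/p)) powr p" using h p a0 by (intro powr_mono2) auto
    moreover have "(P n m powr (1/p)) powr p \<le> 1 powr p" using h p by (intro powr_mono2) auto
    ultimately show ?thesis using a0 by (simp add: powr_powr)
  qed
  have grp: "(\<Sum>i\<in>supp (xs n). h i) = (\<Sum>m\<in>{1..M}. \<Sum>i\<in>Jidx \<alpha> s m (xs n). h i)"
    if "n \<ge> 1" for n and h :: "nat \<Rightarrow> real"
  proof -
    have "(\<Sum>m\<in>{1..M}. \<Sum>i\<in>{i\<in>supp (xs n). cls M (jj n i) = m}. h i) = (\<Sum>i\<in>supp (xs n). h i)"
      using cls_props[OF M0] finx[OF that] by (intro sum.group) auto
    moreover have "{i\<in>supp (xs n). cls M (jj n i) = m} = Jidx \<alpha> s m (xs n)" if "m \<in> {1..M}" for m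
      using Jid[OF \<open>n \<ge> 1\<close>] cls_iff[OF M0 that] by auto
    ultimately show ?thesis by simp
  qed
  define SS where "SS n = (\<Sum>i\<in>supp (xs n). \<bar>xs n i\<bar> powr p)" for n
  have SSb: "real M * \<alpha> powr (-3 * p) \<le> SS n \<and> SS n \<le> real M" if "n \<ge> 1" for n
  proof -
    have "SS n = (\<Sum>m\<in>{1..M}. P n m)" unfolding SS_def P_def by (rule grp[OF that])
    moreover have "(\<Sum>m\<in>{1..M}. P n m) \<le> (\<Sum>m\<in>{1..M}. 1)" using Pb that by (intro sum_mono) auto
    moreover have "(\<Sum>m\<in>{1..M}. \<alpha> powr (-3 * p)) \<le> (\<Sum>m\<in>{1..M}. P n m)" using Pb that by (intro sum_mono) auto
    ultimately show ?thesis by simp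
  qed
  have xpow: "\<bar>xs n i\<bar> powr p = \<alpha> powr (p * real_of_int (jj n i))" if "n \<ge> 1" "i \<in> supp (xs n)" for n i
    using jjp[OF that] a0 by (simp add: powr_powr mult.commute)
  have jjle: "jj n i \<le> 0" if "n \<ge> 1" "i \<in> supp (xs n)" for n i
  proof -
    define m where "m = cls M (jj n i)"
    have m1: "m \<ge> 1" "m \<le> M" using cls_props[OF M0] by (auto simp: m_def)
    have "i \<in> Jidx \<alpha> s m (xs n)" using Jid[OF that(1)] that(2) cls_props[OF M0] by (auto simp: m_def)
    moreover have "finite (Jidx \<alpha> s m (xs n))" using finx[OF that(1)] Jid[OF that(1)] by auto
    ultimately have "\<bar>xs n i\<bar> powr p \<le> P n m" unfolding P_def by (intro member_le_sum) auto
    then have "\<alpha> powr (p * real_of_int (jj n i)) \<le> \<alpha> powr 0" using Pb[OF that(1) m1(1)] xpow[OF that] by simp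
    then have "p * real_of_int (jj n i) \<le> 0" using a1 by (simp only: powr_le_cancel_iff)
    then show ?thesis using p by (simp add: mult_le_0_iff)
  qed
  have nonempty: "supp (xs n) \<noteq> {}" if "n \<ge> 1" for n
  proof
    assume "supp (xs n) = {}"
    then have "P n 1 = 0" using Jid[OF that] by (simp add: P_def)
    moreover have "\<alpha> powr (-3 * p) > 0" using a0 by simp
    ultimately show False using Pb[OF that, of 1] by simp
  qed
  have ord: "\<forall>i\<in>supp (xs n). \<forall>j\<in>supp (xs (n + k + 1)). i < j" if "n \<ge> 1" for n k
  proof (induction k)
    case 0
    then show ?case using bl that by (simp add: block_seq_def)
  next
    case (Suc k)
    obtain z where z: "z \<in> supp (xs (n + k + 1))" using nonempty[of "n + k + 1"] by auto
    have "\<forall>j\<in>supp (xs (Suc (n + k + 1))). z < j" using bl z unfolding block_seq_def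
      by (metis le_add2 add.commute)
    then have "\<forall>j\<in>supp (xs (n + Suc k + 1)). z < j" by simp
    then show ?case using Suc.IH z by fastforce
  qed
  have disj: "supp (xs n) \<inter> supp (xs n') = {}" if "n \<ge> 1" "n' \<ge> 1" "n \<noteq> n'" for n n'
  proof (cases "n < n'")
    case True
    then obtain k where "n' = n + k + 1" by (metis add.commute add_Suc less_iff_Suc_add plus_1_eq_Suc)
    then show ?thesis using ord[OF that(1), of k] by fastforce
  next
    case False
    then have "n' < n" using that by simp
    then obtain k where "n = n' + k + 1" by (metis add.commute add_Suc less_iff_Suc_add plus_1_eq_Suc)
    then show ?thesis using ord[OF that(2), of k] by fastforce
  qed
  define X where "X = (\<lambda>i. \<Sum>n=1..N. a n * xs n i)"
  define U where "U = (\<Union>n\<in>{1..N}. supp (xs n))"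
  have finU: "finite U" using finx by (auto simp: U_def)
  have Xval: "X i = a n * xs n i" if "n \<in> {1..N}" "i \<in> supp (xs n)" for n i
  proof -
    have "\<forall>n'\<in>{1..N} - {n}. a n' * xs n' i = 0"
    proof
      fix n' assume "n' \<in> {1..N} - {n}"
      then have "i \<notin> supp (xs n')" using disj[of n n'] that by auto
      then show "a n' * xs n' i = 0" by (simp add: supp_def)
    qed
    then have z: "(\<Sum>n'\<in>{1..N} - {n}. a n' * xs n' i) = 0" by (rule sum.neutral)
    have "(\<Sum>n'=1..N. a n' * xs n' i) = a n * xs n i + (\<Sum>n'\<in>{1..N} - {n}. a n' * xs n' i)"
      using that(1) by (intro sum.remove) auto
    then have "(\<Sum>n'=1..N. a n' * xs n' i) = a n * xs n i" using z by simp
    then show ?thesis by (simp add: X_def)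
  qed
  have Xz: "X i = 0" if "i \<notin> U" for i
    using that by (auto simp: X_def U_def supp_def intro!: sum.neutral)
  have suppX: "supp X \<subseteq> U" using Xz by (auto simp: supp_def)
  have sumU: "(\<Sum>i\<in>U. F i) = (\<Sum>n\<in>{1..N}. \<Sum>i\<in>supp (xs n). F i)" for F :: "nat \<Rightarrow> real"
    unfolding U_def using finx disj by (intro sum.UNION_disjoint) auto
  have decomp: "(\<Sum>i\<in>supp X. F i) = (\<Sum>n\<in>{1..N}. \<Sum>i\<in>supp (xs n). F i)"
    if "\<forall>i\<in>U. i \<notin> supp X \<longrightarrow> F i = 0" for F :: "nat \<Rightarrow> real"
  proof -
    have "(\<Sum>i\<in>supp X. F i) = (\<Sum>i\<in>U. F i)"
      using finU suppX that by (intro sum.mono_neutral_left) auto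
    then show ?thesis using sumU by simp
  qed
  define S where "S = (\<Sum>n=1..N. \<bar>a n\<bar> powr p)"
  have S0: "S \<ge> 0" by (simp add: S_def sum_nonneg)
  have pnX: "pnorm p X = (\<Sum>n=1..N. \<bar>a n\<bar> powr p * SS n) powr (1/p)"
  proof -
    have "(\<Sum>i\<in>supp X. \<bar>X i\<bar> powr p) = (\<Sum>n\<in>{1..N}. \<Sum>i\<in>supp (xs n). \<bar>X i\<bar> powr p)"
      by (intro decomp) (auto simp: supp_def)
    also have "\<dots> = (\<Sum>n\<in>{1..N}. \<bar>a n\<bar> powr p * SS n)"
    proof (intro sum.cong refl)
      fix n assume n: "n \<in> {1..N}"
      have "(\<Sum>i\<in>supp (xs n). \<bar>X i\<bar> powr p) = (\<Sum>i\<in>supp (xs n). \<bar>a n\<bar> powr p * \<bar>xs n i\<bar> powr p)"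
        using Xval[OF n] by (intro sum.cong refl) (simp add: abs_mult powr_mult)
      then show "(\<Sum>i\<in>supp (xs n). \<bar>X i\<bar> powr p) = \<bar>a n\<bar> powr p * SS n"
        by (simp add: SS_def sum_distrib_left)
    qed
    finally show ?thesis by (simp add: pnorm_def)
  qed
  have pnlow: "(real M * \<alpha> powr (-3 * p) * S) powr (1/p) \<le> pnorm p X"
  proof -
    have "real M * \<alpha> powr (-3 * p) * S = (\<Sum>n=1..N. \<bar>a n\<bar> powr p * (real M * \<alpha> powr (-3 * p)))"
      by (simp add: S_def sum_distrib_left mult.commute)
    also have "\<dots> \<le> (\<Sum>n=1..N. \<bar>a n\<bar> powr p * SS n)"
      using SSb by (intro sum_mono mult_left_mono) auto
    finally show ?thesis unfolding pnX using a0 S0 p by (intro powr_mono2) auto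
  qed
  have pnup: "pnorm p X \<le> (real M * S) powr (1/p)"
  proof -
    have "(\<Sum>n=1..N. \<bar>a n\<bar> powr p * SS n) \<le> (\<Sum>n=1..N. \<bar>a n\<bar> powr p * real M)"
      using SSb by (intro sum_mono mult_left_mono) auto
    also have "\<dots> = real M * S" by (simp add: S_def sum_distrib_left mult.commute)
    finally show ?thesis unfolding pnX using SSb p
      by (intro powr_mono2) (auto intro!: sum_nonneg mult_nonneg_nonneg order_trans[OF _ conjunct1[OF SSb]])
  qed
  define A where "A = (\<Sum>k<M. \<alpha> powr (- p * real k / q))"
  have Aub: "A \<le> 1 + 2 * q" unfolding A_def using geo_bound[OF ap2 q a1] .
  have Alb: "A \<ge> 1"
  proof -
    have "(\<Sum>k\<in>{0}. \<alpha> powr (- p * real k / q)) \<le> A"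
      unfolding A_def using M0 by (intro sum_mono2) auto
    then show ?thesis using a0 by simp
  qed
  have rgt: "r > 1" using r .
  have q0: "q > 0" using q by simp
  have Ub: "(\<Sum>i\<in>supp X. X i * y i) \<le> 2 * (A * S) powr (1/p)" if y: "y \<in> KM q r" for y
  proof -
    have KP: "finite (supp y) \<and> (\<forall>i\<in>supp y. \<exists>d::nat. \<bar>y i\<bar> = real r powr (- real d / q))
         \<and> (\<Sum>i\<in>supp y. \<bar>y i\<bar> powr q) \<le> 1" using KM_props[OF rgt q0 y] .
    define \<beta> where "\<beta> n = (\<Sum>i\<in>supp (xs n). \<bar>y i\<bar> powr q)" for n
    have sb: "(\<Sum>n\<in>{1..N}. \<beta> n) \<le> 1"
    proof -
      have "(\<Sum>n\<in>{1..N}. \<beta> n) = (\<Sum>i\<in>U. \<bar>y i\<bar> powr q)" unfolding \<beta>_def by (rule sumU[symmetric])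
      also have "\<dots> = (\<Sum>i\<in>U \<inter> supp y. \<bar>y i\<bar> powr q)"
        using finU by (intro sum.mono_neutral_right) (auto simp: supp_def)
      also have "\<dots> \<le> (\<Sum>i\<in>supp y. \<bar>y i\<bar> powr q)" using KP by (intro sum_mono2) auto
      finally show ?thesis using KP by linarith
    qed
    define T where "T n = (\<Sum>i\<in>supp (xs n). \<bar>xs n i\<bar> * \<bar>y i\<bar>)" for n
    have step1: "(\<Sum>i\<in>supp X. X i * y i) \<le> (\<Sum>n\<in>{1..N}. \<bar>a n\<bar> * T n)"
    proof -
      have "(\<Sum>i\<in>supp X. X i * y i) = (\<Sum>n\<in>{1..N}. \<Sum>i\<in>supp (xs n). X i * y i)"
        by (intro decomp) (auto simp: supp_def)
      also have "\<dots> \<le> (\<Sum>n\<in>{1..N}. \<bar>a n\<bar> * T n)"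
      proof (intro sum_mono)
        fix n assume n: "n \<in> {1..N}"
        have "(\<Sum>i\<in>supp (xs n). X i * y i) \<le> (\<Sum>i\<in>supp (xs n). \<bar>a n\<bar> * (\<bar>xs n i\<bar> * \<bar>y i\<bar>))"
        proof (intro sum_mono)
          fix i assume "i \<in> supp (xs n)"
          then have "X i * y i = a n * xs n i * y i" using Xval[OF n] by simp
          also have "\<dots> \<le> \<bar>a n * xs n i * y i\<bar>" by simp
          finally show "X i * y i \<le> \<bar>a n\<bar> * (\<bar>xs n i\<bar> * \<bar>y i\<bar>)" by (simp add: abs_mult)
        qed
        then show "(\<Sum>i\<in>supp (xs n). X i * y i) \<le> \<bar>a n\<bar> * T n" by (simp add: T_def sum_distrib_left)
      qed
      finally show ?thesis .
    qed
    have pern: "\<bar>a n\<bar> * T n \<le> \<bar>a n\<bar> powr p * \<mu> powr (1 - p) * A + \<mu> * \<beta> n"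
      if n: "n \<in> {1..N}" and mu: "\<mu> > 0" for n \<mu>
    proof (cases "a n = 0")
      case True
      then show ?thesis using mu p by (simp add: \<beta>_def sum_nonneg)
    next
      case False
      have n1: "n \<ge> 1" using n by simp
      have an: "\<bar>a n\<bar> > 0" using False by simp
      define c where "c = log \<alpha> (\<mu> / \<bar>a n\<bar>)"
      have ac: "\<alpha> powr c = \<mu> / \<bar>a n\<bar>" unfolding c_def using a1 mu an by (intro powr_log_cancel) auto
      define \<tau> where "\<tau> i = (jj n i - \<lceil>c\<rceil>) mod int M" for i
      have peri: "\<bar>xs n i\<bar> * \<bar>y i\<bar> \<le> \<alpha> powr (- p * c / q) * (\<alpha> powr (- p * real_of_int (\<tau> i) / q) * \<bar>xs n i\<bar> powr p) + \<alpha> powr c * \<bar>y i\<bar> powr q"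
        if i: "i \<in> supp (xs n)" for i
      proof (cases "y i = 0")
        case True
        then show ?thesis by simp
      next
        case False
        then obtain d :: nat where d: "\<bar>y i\<bar> = real r powr (- real d / q)" using KP by (auto simp: supp_def)
        have yd: "\<bar>y i\<bar> = \<alpha> powr (- (p * M * d) / q)"
        proof -
          have "\<bar>y i\<bar> = (\<alpha> powr (p * real M)) powr (- real d / q)" using d rpow by simp
          also have "\<dots> = \<alpha> powr (- (p * M * d) / q)" by (simp add: powr_powr)
          finally show ?thesis .
        qed
        have "\<bar>xs n i\<bar> * \<bar>y i\<bar> = \<alpha> powr (real_of_int (jj n i) - p * M * d / q)"
          using jjp[OF n1 i] yd by (simp add: powr_add[symmetric])
        also have "\<dots> \<le> \<alpha> powr (p * jj n i - p * (c + real_of_int (\<tau> i)) / q) + \<alpha> powr (c - p * M * d)"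
          unfolding \<tau>_def by (rule pc[OF a1 p q pq M0])
        also have "\<alpha> powr (p * jj n i - p * (c + real_of_int (\<tau> i)) / q)
            = \<alpha> powr (- p * c / q) * (\<alpha> powr (- p * real_of_int (\<tau> i) / q) * \<bar>xs n i\<bar> powr p)"
        proof -
          have e: "p * jj n i - p * (c + real_of_int (\<tau> i)) / q = (- p * c / q) + ((- p * real_of_int (\<tau> i) / q) + p * jj n i)"
            using q by (simp add: field_simps)
          show ?thesis unfolding e powr_add xpow[OF n1 i] ..
        qed
        also have "\<alpha> powr (c - p * M * d) = \<alpha> powr c * \<bar>y i\<bar> powr q"
          using yd q by (simp add: powr_powr powr_add[symmetric])
        finally show ?thesis .
      qed
      have Tb: "T n \<le> \<alpha> powr (- p * c / q) * (\<Sum>i\<in>supp (xs n). \<alpha> powr (- p * real_of_int (\<tau> i) / q) * \<bar>xs n i\<bar> powr p) + \<alpha> powr c * \<beta> n"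
        unfolding T_def \<beta>_def
        using peri by (simp add: sum_distrib_left sum.distrib[symmetric] sum_mono)
      have tauA: "(\<Sum>i\<in>supp (xs n). \<alpha> powr (- p * real_of_int (\<tau> i) / q) * \<bar>xs n i\<bar> powr p) \<le> A"
      proof -
        define g where "g m = (int m - \<lceil>c\<rceil>) mod int M" for m
        define f where "f m = nat (g m)" for m
        have g0: "g m \<ge> 0" "g m < int M" for m using M0 by (auto simp: g_def)
        have fg: "real (f m) = real_of_int (g m)" for m using g0 by (simp add: f_def)
        have "(\<Sum>i\<in>supp (xs n). \<alpha> powr (- p * real_of_int (\<tau> i) / q) * \<bar>xs n i\<bar> powr p)
            = (\<Sum>m\<in>{1..M}. \<Sum>i\<in>Jidx \<alpha> s m (xs n). \<alpha> powr (- p * real_of_int (\<tau> i) / q) * \<bar>xs n i\<bar> powr p)"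
          by (rule grp[OF n1])
        also have "\<dots> = (\<Sum>m\<in>{1..M}. \<alpha> powr (- p * real (f m) / q) * P n m)"
        proof (intro sum.cong refl)
          fix m assume m: "m \<in> {1..M}"
          have "\<tau> i = g m" if "i \<in> Jidx \<alpha> s m (xs n)" for i
          proof -
            have "int M dvd (jj n i - \<lceil>c\<rceil>) - (int m - \<lceil>c\<rceil>)" using that Jid[OF n1] by auto
            then show ?thesis unfolding \<tau>_def g_def by (simp only: mod_eq_dvd_iff)
          qed
          then show "(\<Sum>i\<in>Jidx \<alpha> s m (xs n). \<alpha> powr (- p * real_of_int (\<tau> i) / q) * \<bar>xs n i\<bar> powr p)
              = \<alpha> powr (- p * real (f m) / q) * P n m"
            unfolding P_def fg by (simp add: sum_distrib_left)
        qed
        also have "\<dots> \<le> (\<Sum>m\<in>{1..M}. \<alpha> powr (- p * real (f m) / q))"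
          using Pb n1 by (intro sum_mono) (auto intro: mult_left_le)
        also have "\<dots> = (\<Sum>k\<in>f ` {1..M}. \<alpha> powr (- p * real k / q))"
        proof -
          have "inj_on f {1..M}"
          proof
            fix m m' assume m: "m \<in> {1..M}" and m': "m' \<in> {1..M}" and e: "f m = f m'"
            then have "g m = g m'" using g0(1)[of m] g0(1)[of m'] unfolding f_def by (metis nat_eq_iff2)
            then have "int M dvd int m - int m'" unfolding g_def
              by (simp add: mod_eq_dvd_iff)
            then show "m = m'" using dvd_same_class[OF m m', of "int m"] by simp
          qed
          then show ?thesis by (simp add: sum.reindex)
        qed
        also have "\<dots> \<le> A" unfolding A_def using g0 by (intro sum_mono2) (auto simp: f_def nat_less_iff)
        finally show ?thesis .
      qed
      have "\<bar>a n\<bar> * T n \<le> \<bar>a n\<bar> * (\<alpha> powr (- p * c / q) * A + \<alpha> powr c * \<beta> n)"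
      proof -
        have "\<alpha> powr (- p * c / q) * (\<Sum>i\<in>supp (xs n). \<alpha> powr (- p * real_of_int (\<tau> i) / q) * \<bar>xs n i\<bar> powr p)
           \<le> \<alpha> powr (- p * c / q) * A" using tauA by (intro mult_left_mono) auto
        then have "T n \<le> \<alpha> powr (- p * c / q) * A + \<alpha> powr c * \<beta> n" using Tb by linarith
        then show ?thesis by (intro mult_left_mono) auto
      qed
      also have "\<dots> = \<bar>a n\<bar> * \<alpha> powr (- p * c / q) * A + \<mu> * \<beta> n"
        using ac an by (simp add: field_simps)
      also have "\<bar>a n\<bar> * \<alpha> powr (- p * c / q) = \<bar>a n\<bar> powr p * \<mu> powr (1 - p)"
      proof -
        have "- p * c / q = - (p / q) * c" by simp
        also have "\<dots> = c * (1 - p)" unfolding pq1 by (simp add: algebra_simps)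
        finally have e: "- p * c / q = c * (1 - p)" .
        have "\<alpha> powr (- p * c / q) = (\<alpha> powr c) powr (1 - p)"
          by (simp only: e powr_powr)
        also have "\<dots> = \<mu> powr (1 - p) / \<bar>a n\<bar> powr (1 - p)" using ac mu an by (simp add: powr_divide)
        finally have "\<bar>a n\<bar> * \<alpha> powr (- p * c / q) = (\<bar>a n\<bar> powr 1 / \<bar>a n\<bar> powr (1 - p)) * \<mu> powr (1 - p)"
          using an by simp
        also have "\<bar>a n\<bar> powr 1 / \<bar>a n\<bar> powr (1 - p) = \<bar>a n\<bar> powr p"
          by (subst powr_diff[symmetric]) simp
        finally show ?thesis .
      qed
      finally show ?thesis by simp
    qed
    show ?thesis
    proof (cases "S = 0")
      case True
      then have "\<forall>n\<in>{1..N}. \<bar>a n\<bar> powr p = 0" unfolding S_def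
        by (subst sum_nonneg_eq_0_iff[symmetric]) auto
      then have "\<forall>n\<in>{1..N}. a n = 0" by simp
      then have "(\<Sum>n\<in>{1..N}. \<bar>a n\<bar> * T n) = 0" by simp
      then show ?thesis using step1 True by simp
    next
      case False
      then have Sp: "S > 0" using S0 by simp
      define \<mu> where "\<mu> = (A * S) powr (1/p)"
      have AS: "A * S > 0" using Alb Sp by simp
      have mu: "\<mu> > 0" using Alb Sp by (simp add: \<mu>_def)
      have "(\<Sum>n\<in>{1..N}. \<bar>a n\<bar> * T n) \<le> (\<Sum>n\<in>{1..N}. \<bar>a n\<bar> powr p * \<mu> powr (1 - p) * A + \<mu> * \<beta> n)"
        using pern mu by (intro sum_mono) auto
      also have "\<dots> = \<mu> powr (1 - p) * (A * S) + \<mu> * (\<Sum>n\<in>{1..N}. \<beta> n)"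
        by (simp add: sum.distrib sum_distrib_left sum_distrib_right S_def mult.commute mult.left_commute)
      also have "\<dots> \<le> \<mu> powr (1 - p) * (A * S) + \<mu>"
        using sb mu by (simp add: mult_left_le)
      also have "\<mu> powr (1 - p) * (A * S) = (A * S) powr (1/p)"
      proof -
        have "\<mu> powr (1 - p) * (A * S) = (A * S) powr ((1 - p) / p) * (A * S) powr 1"
          using AS Alb Sp by (simp add: \<mu>_def powr_powr)
        also have "\<dots> = (A * S) powr ((1 - p) / p + 1)" by (simp add: powr_add)
        also have "(1 - p) / p + 1 = 1 / p" using p by (simp add: field_simps)
        finally show ?thesis .
      qed
      finally show ?thesis using step1 by (simp add: \<mu>_def)
    qed
  qed
  have Lb: "\<exists>y\<in>KM q r. \<alpha> powr (-4 * p) * S powr (1/p) \<le> (\<Sum>i\<in>supp X. X i * y i)" if Sp: "S > 0"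
  proof -
    define w where "w n = \<bar>a n\<bar> powr p / S" for n
    define t where "t n = log \<alpha> (w n) / p" for n
    define F where "F n = \<lfloor>t n\<rfloor>" for n
    define mm where "mm n = cls M (- F n)" for n
    define d where "d n i = nat (- ((jj n i + F n) div int M))" for n i
    define own where "own i = (THE n. n \<in> {1..N} \<and> i \<in> supp (xs n))" for i
    have own: "own i = n" if "n \<in> {1..N}" "i \<in> supp (xs n)" for n i
      unfolding own_def using that disj by (intro the_equality) auto
    define y where "y i = (if i \<in> U \<and> a (own i) \<noteq> 0 \<and> i \<in> Jidx \<alpha> s (mm (own i)) (xs (own i))
       then sgn (a (own i) * xs (own i) i) * real r powr (- real (d (own i) i) / q) else 0)" for i
    have yn: "y i = (if a n \<noteq> 0 \<and> i \<in> Jidx \<alpha> s (mm n) (xs n) then sgn (a n * xs n i) * real r powr (- real (d n i) / q) else 0)"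
      if "n \<in> {1..N}" "i \<in> supp (xs n)" for n i
      using own[OF that] that by (auto simp: y_def U_def)
    have yout: "y i = 0" if "i \<notin> U" for i using that by (simp add: y_def)
    have wsum: "(\<Sum>n\<in>{1..N}. w n) = 1" using Sp by (simp add: w_def S_def sum_divide_distrib[symmetric])
    have key: "real r powr (- real (d n i)) \<le> w n * \<bar>xs n i\<bar> powr p
       \<and> \<alpha> powr (- p / q) * w n powr (1/q) * \<bar>xs n i\<bar> powr p \<le> \<bar>xs n i\<bar> * (real r powr (- real (d n i) / q))"
      if n: "n \<in> {1..N}" and an: "a n \<noteq> 0" and i: "i \<in> Jidx \<alpha> s (mm n) (xs n)" for n i
    proof -
      have n1: "n \<ge> 1" using n by simp
      have isupp: "i \<in> supp (xs n)" using i Jid[OF n1] by auto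
      have wpos: "w n > 0" using an Sp by (simp add: w_def)
      have "\<bar>a n\<bar> powr p \<le> S" unfolding S_def using n by (intro member_le_sum) auto
      then have wle: "w n \<le> 1" using Sp by (simp add: w_def)
      have tle: "t n \<le> 0" using wpos wle a1 p by (simp add: t_def divide_nonpos_pos)
      have Fle: "F n \<le> 0" using tle by (simp add: F_def)
      have apt: "\<alpha> powr (p * t n) = w n" using p a1 wpos by (simp add: t_def powr_log_cancel)
      have mmM: "mm n \<in> {1..M}" using cls_props[OF M0] by (simp add: mm_def)
      have d1: "int M dvd (- F n - int (mm n))" using cls_props[OF M0] by (simp add: mm_def)
      have d2: "int M dvd (jj n i - int (mm n))" using i Jid[OF n1] by auto
      have "int M dvd (jj n i - int (mm n)) - (- F n - int (mm n))" using dvd_diff[OF d2 d1] .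
      then have d3: "int M dvd (jj n i + F n)" by simp
      have jF: "jj n i + F n \<le> 0" using jjle[OF n1 isupp] Fle by simp
      obtain k where k: "jj n i + F n = int M * k" using d3 by (auto elim: dvdE)
      have k0: "k \<le> 0" using k jF M0 by (simp add: mult_le_0_iff)
      have dk: "d n i = nat (- k)" using k M0 by (simp add: d_def)
      have dd: "real M * real (d n i) = - real_of_int (jj n i + F n)" using k k0 dk by simp
      have rd: "real r powr (- real (d n i)) = \<alpha> powr (p * real_of_int (jj n i + F n))"
      proof -
        have "real r powr (- real (d n i)) = \<alpha> powr (p * real M * (- real (d n i)))"
          by (subst rpow[symmetric]) (simp add: powr_powr)
        also have "p * real M * (- real (d n i)) = p * real_of_int (jj n i + F n)"
        proof -
          have "p * real M * (- real (d n i)) = - p * (real M * real (d n i))" by simp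
          also have "\<dots> = p * real_of_int (jj n i + F n)" unfolding dd by (simp add: algebra_simps)
          finally show ?thesis .
        qed
        finally show ?thesis .
      qed
      have rdq: "real r powr (- real (d n i) / q) = \<alpha> powr (p * real_of_int (jj n i + F n) / q)"
      proof -
        have "real r powr (- real (d n i) / q) = \<alpha> powr (p * real M * (- real (d n i) / q))"
          by (subst rpow[symmetric]) (simp add: powr_powr)
        also have "p * real M * (- real (d n i) / q) = p * real_of_int (jj n i + F n) / q"
        proof -
          have "p * real M * (- real (d n i) / q) = - p * (real M * real (d n i)) / q" by simp
          also have "\<dots> = p * real_of_int (jj n i + F n) / q" unfolding dd by (simp add: algebra_simps)
          finally show ?thesis .
        qed
        finally show ?thesis .
      qed
      have "real r powr (- real (d n i)) \<le> \<alpha> powr (p * real_of_int (jj n i) + p * t n)"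
        unfolding rd using a1 p F_def by (simp add: algebra_simps)
      also have "\<dots> = w n * \<bar>xs n i\<bar> powr p" using xpow[OF n1 isupp] apt by (simp add: powr_add)
      finally have part1: "real r powr (- real (d n i)) \<le> w n * \<bar>xs n i\<bar> powr p" .
      have Ft: "real_of_int (F n) > t n - 1" unfolding F_def by linarith
      have "\<alpha> powr (- p / q) * w n powr (1/q) * \<bar>xs n i\<bar> powr p
          = \<alpha> powr (real_of_int (jj n i) + p * (real_of_int (jj n i) + t n - 1) / q)"
      proof -
        have wq: "w n powr (1/q) = \<alpha> powr (p * t n / q)" using apt[symmetric] by (simp add: powr_powr)
        have eq2: "real_of_int (jj n i) + p * (real_of_int (jj n i) + t n - 1) / q
            = - p / q + p * t n / q + p * real_of_int (jj n i)"
        proof -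
          have "p * (real_of_int (jj n i) + t n - 1) / q = (p / q) * real_of_int (jj n i) + p * t n / q - p / q"
            by (simp add: add_divide_distrib diff_divide_distrib algebra_simps)
          moreover have "(p / q) * real_of_int (jj n i) = p * real_of_int (jj n i) - real_of_int (jj n i)"
            unfolding pq1 by (simp add: algebra_simps)
          ultimately show ?thesis by linarith
        qed
        show ?thesis unfolding eq2 powr_add wq xpow[OF n1 isupp] ..
      qed
      also have "\<dots> \<le> \<alpha> powr (real_of_int (jj n i) + p * real_of_int (jj n i + F n) / q)"
        using a1 p q Ft by (auto intro!: divide_right_mono mult_left_mono)
      also have "\<dots> = \<bar>xs n i\<bar> * (real r powr (- real (d n i) / q))"
        unfolding rdq jjp[OF n1 isupp] by (simp add: powr_add)
      finally show ?thesis using part1 by simp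
    qed
    have rq: "real r powr x > 0" for x using r by simp
    have yJ: "y i \<noteq> 0 \<longleftrightarrow> a n \<noteq> 0 \<and> i \<in> Jidx \<alpha> s (mm n) (xs n)"
      if "n \<in> {1..N}" "i \<in> supp (xs n)" for n i
      using yn[OF that] that(2) rq by (auto simp: supp_def sgn_if)
    define e where "e i = d (own i) i" for i
    have suppyU: "supp y \<subseteq> U" using yout by (auto simp: supp_def)
    have fy: "finite (supp y)" using finite_subset[OF suppyU finU] .
    have yabs: "\<forall>i\<in>supp y. \<bar>y i\<bar> = real r powr (- real (e i) / q)"
    proof
      fix i assume i: "i \<in> supp y"
      then obtain n where n: "n \<in> {1..N}" "i \<in> supp (xs n)" using suppyU by (auto simp: U_def)
      then have "a n \<noteq> 0 \<and> i \<in> Jidx \<alpha> s (mm n) (xs n)" using yJ i by (simp add: supp_def)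
      moreover have "a n * xs n i \<noteq> 0" using calculation n by (simp add: supp_def)
      ultimately show "\<bar>y i\<bar> = real r powr (- real (e i) / q)"
        using yn[OF n] own[OF n] rq by (simp add: e_def abs_mult abs_sgn_eq)
    qed
    obtain n0 where n0: "n0 \<in> {1..N}" "a n0 \<noteq> 0"
    proof -
      have "\<exists>n\<in>{1..N}. a n \<noteq> 0"
      proof (rule ccontr)
        assume "\<not> ?thesis"
        then have "S = 0" by (simp add: S_def)
        then show False using Sp by simp
      qed
      then show ?thesis using that by blast
    qed
    have "Jidx \<alpha> s (mm n0) (xs n0) \<noteq> {}"
    proof
      assume "Jidx \<alpha> s (mm n0) (xs n0) = {}"
      then have "P n0 (mm n0) = 0" by (simp add: P_def)
      moreover have "mm n0 \<ge> 1" using cls_props[OF M0] by (simp add: mm_def)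
      ultimately show False using Pb[of n0 "mm n0"] n0 a0 by (smt (verit) atLeastAtMost_iff powr_gt_zero)
    qed
    then obtain i0 where i0: "i0 \<in> Jidx \<alpha> s (mm n0) (xs n0)" by auto
    have "i0 \<in> supp (xs n0)" using i0 n0 Jid[of n0] by auto
    then have "y i0 \<noteq> 0" using yJ[OF n0(1)] i0 n0 by simp
    then have ney: "supp y \<noteq> {}" by (auto simp: supp_def)
    have ysum: "(\<Sum>i\<in>supp y. real r powr (- real (e i))) \<le> 1"
    proof -
      define G where "G i = (if y i \<noteq> 0 then real r powr (- real (e i)) else 0)" for i
      have "(\<Sum>i\<in>supp y. real r powr (- real (e i))) = (\<Sum>i\<in>supp y. G i)"
        by (intro sum.cong) (auto simp: G_def supp_def)
      also have "\<dots> = (\<Sum>i\<in>U. G i)"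
        using suppyU finU by (intro sum.mono_neutral_left) (auto simp: G_def supp_def)
      also have "\<dots> = (\<Sum>n\<in>{1..N}. \<Sum>i\<in>supp (xs n). G i)" by (rule sumU)
      also have "\<dots> \<le> (\<Sum>n\<in>{1..N}. w n)"
      proof (intro sum_mono)
        fix n assume n: "n \<in> {1..N}"
        have n1: "n \<ge> 1" using n by simp
        show "(\<Sum>i\<in>supp (xs n). G i) \<le> w n"
        proof (cases "a n = 0")
          case True
          then have "\<forall>i\<in>supp (xs n). G i = 0" using yJ[OF n] by (simp add: G_def)
          then show ?thesis using S0 by (simp add: w_def)
        next
          case False
          have Jsub: "Jidx \<alpha> s (mm n) (xs n) \<subseteq> supp (xs n)" using Jid[OF n1] by auto
          have "(\<Sum>i\<in>supp (xs n). G i) = (\<Sum>i\<in>Jidx \<alpha> s (mm n) (xs n). G i)"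
            using finx[OF n1] Jsub yJ[OF n] False
            by (intro sum.mono_neutral_right) (auto simp: G_def)
          also have "\<dots> \<le> (\<Sum>i\<in>Jidx \<alpha> s (mm n) (xs n). w n * \<bar>xs n i\<bar> powr p)"
          proof (intro sum_mono)
            fix i assume i: "i \<in> Jidx \<alpha> s (mm n) (xs n)"
            then have "i \<in> supp (xs n)" using Jsub by auto
            then have "G i = real r powr (- real (d n i))"
              using yJ[OF n] i False own[OF n] by (simp add: G_def e_def)
            then show "G i \<le> w n * \<bar>xs n i\<bar> powr p" using key[OF n False i] by simp
          qed
          also have "\<dots> = w n * P n (mm n)" by (simp add: P_def sum_distrib_left)
          also have "\<dots> \<le> w n"
          proof -
            have "mm n \<ge> 1" using cls_props[OF M0] by (simp add: mm_def)
            then have "P n (mm n) \<le> 1" using Pb[OF n1] by simp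
            moreover have "w n \<ge> 0" by (simp add: w_def S0)
            ultimately show ?thesis by (simp add: mult_left_le)
          qed
          finally show ?thesis .
        qed
      qed
      finally show ?thesis using wsum by simp
    qed
    have yK: "y \<in> KM q r" using kraft_real[OF rgt q0 fy ney yabs ysum] .
    define K where "K = \<alpha> powr (- p / q) * \<alpha> powr (-3 * p)"
    have K0: "K \<ge> 0" by (simp add: K_def)
    have pern: "(\<Sum>i\<in>supp (xs n). X i * y i) \<ge> \<bar>a n\<bar> powr p * (K / S powr (1/q))" if n: "n \<in> {1..N}" for n
    proof (cases "a n = 0")
      case True
      then show ?thesis using Xval[OF n] p by simp
    next
      case False
      have n1: "n \<ge> 1" using n by simp
      have Jsub: "Jidx \<alpha> s (mm n) (xs n) \<subseteq> supp (xs n)" using Jid[OF n1] by auto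
      have an: "\<bar>a n\<bar> > 0" using False by simp
      have "(\<Sum>i\<in>supp (xs n). X i * y i) = (\<Sum>i\<in>Jidx \<alpha> s (mm n) (xs n). X i * y i)"
        using finx[OF n1] Jsub yJ[OF n] False
        by (intro sum.mono_neutral_right) auto
      also have "\<dots> \<ge> (\<Sum>i\<in>Jidx \<alpha> s (mm n) (xs n). \<bar>a n\<bar> * (\<alpha> powr (- p / q) * w n powr (1/q) * \<bar>xs n i\<bar> powr p))"
      proof (intro sum_mono)
        fix i assume i: "i \<in> Jidx \<alpha> s (mm n) (xs n)"
        then have isupp: "i \<in> supp (xs n)" using Jsub by auto
        have "X i * y i = (a n * xs n i) * sgn (a n * xs n i) * real r powr (- real (d n i) / q)"
          using Xval[OF n isupp] yn[OF n isupp] i False by simp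
        also have "\<dots> = \<bar>a n\<bar> * (\<bar>xs n i\<bar> * real r powr (- real (d n i) / q))"
        proof -
          have "(a n * xs n i) * sgn (a n * xs n i) = \<bar>a n * xs n i\<bar>"
            by (simp add: sgn_if abs_if)
          then show ?thesis by (simp add: abs_mult)
        qed
        finally show "\<bar>a n\<bar> * (\<alpha> powr (- p / q) * w n powr (1/q) * \<bar>xs n i\<bar> powr p) \<le> X i * y i"
          using key[OF n False i] an by (simp add: mult_left_mono)
      qed
      finally have h1: "(\<Sum>i\<in>supp (xs n). X i * y i) \<ge> \<bar>a n\<bar> * \<alpha> powr (- p / q) * w n powr (1/q) * P n (mm n)"
        by (simp add: P_def sum_distrib_left mult.assoc)
      have "mm n \<ge> 1" using cls_props[OF M0] by (simp add: mm_def)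
      then have "P n (mm n) \<ge> \<alpha> powr (-3 * p)" using Pb[OF n1] by simp
      then have "(\<bar>a n\<bar> * \<alpha> powr (- p / q) * w n powr (1/q)) * \<alpha> powr (-3 * p)
          \<le> (\<bar>a n\<bar> * \<alpha> powr (- p / q) * w n powr (1/q)) * P n (mm n)"
        by (intro mult_left_mono) auto
      then have h2: "\<bar>a n\<bar> * \<alpha> powr (- p / q) * w n powr (1/q) * P n (mm n)
          \<ge> \<bar>a n\<bar> * w n powr (1/q) * K" unfolding K_def
        by (simp add: mult_ac)
      have "\<bar>a n\<bar> * w n powr (1/q) = \<bar>a n\<bar> powr p / S powr (1/q)"
      proof -
        have "w n powr (1/q) = \<bar>a n\<bar> powr (p / q) / S powr (1/q)"
          using Sp by (simp add: w_def powr_divide powr_powr)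
        moreover have "\<bar>a n\<bar> * \<bar>a n\<bar> powr (p / q) = \<bar>a n\<bar> powr p"
        proof -
          have "\<bar>a n\<bar> * \<bar>a n\<bar> powr (p / q) = \<bar>a n\<bar> powr (1 + p / q)" using an by (simp add: powr_add)
          also have "1 + p / q = p" using pq1 by simp
          finally show ?thesis .
        qed
        ultimately show ?thesis by (simp add: mult.assoc[symmetric])
      qed
      then show ?thesis using h1 h2 by simp
    qed
    have "(\<Sum>i\<in>supp X. X i * y i) = (\<Sum>n\<in>{1..N}. \<Sum>i\<in>supp (xs n). X i * y i)"
      by (intro decomp) (auto simp: supp_def)
    also have "\<dots> \<ge> (\<Sum>n\<in>{1..N}. \<bar>a n\<bar> powr p * (K / S powr (1/q)))"
      using pern by (intro sum_mono) auto
    also have "(\<Sum>n\<in>{1..N}. \<bar>a n\<bar> powr p * (K / S powr (1/q))) = S * (K / S powr (1/q))"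
      unfolding S_def by (rule sum_distrib_right[symmetric])
    finally have h: "(\<Sum>i\<in>supp X. X i * y i) \<ge> S * (K / S powr (1/q))" .
    have "S * (K / S powr (1/q)) = K * S powr (1/p)"
    proof -
      have "S / S powr (1/q) = S powr (1 - 1/q)" using Sp by (simp add: powr_diff)
      also have "1 - 1/q = 1/p" using pq by simp
      finally have "S / S powr (1/q) = S powr (1/p)" .
      then show ?thesis by (metis times_divide_eq_right mult.commute)
    qed
    moreover have "\<alpha> powr (-4 * p) \<le> K"
    proof -
      have "-4 * p \<le> - p / q + (-3 * p)" using pq1 p by simp
      then have "\<alpha> powr (-4 * p) \<le> \<alpha> powr (- p / q + (-3 * p))" using a1 by simp
      then show ?thesis unfolding K_def powr_add .
    qed
    ultimately have "\<alpha> powr (-4 * p) * S powr (1/p) \<le> (\<Sum>i\<in>supp X. X i * y i)"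
      using h by (smt (verit) mult_right_mono powr_ge_zero)
    then show ?thesis using yK by blast
  qed
  define Y where "Y = {(\<Sum>i\<in>supp X. X i * y i) | y. y \<in> KM q r}"
  have prn: "prnorm q r X = Sup Y" by (simp add: prnorm_def Y_def)
  have u0: "unitvec 0 \<in> KM q r" by (rule KM.base_pos)
  have u1: "(\<lambda>i. - unitvec 0 i) \<in> KM q r" by (rule KM.base_neg)
  have Yne: "Y \<noteq> {}" using u0 by (auto simp: Y_def)
  have Ybdd: "bdd_above Y" unfolding bdd_above_def Y_def using Ub by blast
  have prU: "prnorm q r X \<le> 2 * (A * S) powr (1/p)"
    unfolding prn using Yne Ub by (intro cSup_least) (auto simp: Y_def)
  have prge: "v \<le> prnorm q r X" if "v \<in> Y" for v unfolding prn using cSup_upper[OF that Ybdd] .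
  have pr0: "prnorm q r X \<ge> 0"
  proof -
    define v where "v = (\<Sum>i\<in>supp X. X i * unitvec 0 i)"
    have "v \<in> Y" using u0 by (auto simp: Y_def v_def)
    moreover have "- v \<in> Y"
    proof -
      have "- v = (\<Sum>i\<in>supp X. X i * (- unitvec 0 i))" by (simp add: v_def sum_negf)
      then show ?thesis using u1 unfolding Y_def
        by (intro CollectI exI[of _ "\<lambda>i. - unitvec 0 i"]) simp
    qed
    ultimately have "v \<le> prnorm q r X" "- v \<le> prnorm q r X" using prge by auto
    then show ?thesis by linarith
  qed
  have pn0: "pnorm p X \<ge> 0" by (simp add: pnorm_def)
  have Mp0: "real M powr (1/p) \<ge> 0" by simp
  have lower: "\<alpha> powr (-4*p) * pnorm p X \<le> real M powr (1/p) * prnorm q r X"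
  proof (cases "S = 0")
    case True
    then have "pnorm p X \<le> 0" using pnup by simp
    then have "pnorm p X = 0" using pn0 by simp
    then show ?thesis using pr0 by simp
  next
    case False
    then have Sp: "S > 0" using S0 by simp
    obtain y where y: "y \<in> KM q r" and hy: "\<alpha> powr (-4 * p) * S powr (1/p) \<le> (\<Sum>i\<in>supp X. X i * y i)"
      using Lb[OF Sp] by blast
    have "(\<Sum>i\<in>supp X. X i * y i) \<in> Y" using y by (auto simp: Y_def)
    then have h1: "\<alpha> powr (-4 * p) * S powr (1/p) \<le> prnorm q r X" using hy prge by fastforce
    have "\<alpha> powr (-4*p) * pnorm p X \<le> \<alpha> powr (-4*p) * (real M * S) powr (1/p)"
      using pnup by (intro mult_left_mono) auto
    also have "\<dots> = real M powr (1/p) * (\<alpha> powr (-4 * p) * S powr (1/p))"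
      using S0 by (simp add: powr_mult)
    also have "\<dots> \<le> real M powr (1/p) * prnorm q r X" using h1 by (intro mult_left_mono) auto
    finally show ?thesis .
  qed
  have upper: "real M powr (1/p) * prnorm q r X \<le> 6 * (p + q) * \<alpha> ^ 4 * pnorm p X"
  proof -
    have "real M powr (1/p) * prnorm q r X \<le> real M powr (1/p) * (2 * (A * S) powr (1/p))"
      using prU Mp0 by (rule mult_left_mono)
    also have "\<dots> = 2 * A powr (1/p) * (real M * S) powr (1/p)"
    proof -
      have e1: "(A * S) powr (1/p) = A powr (1/p) * S powr (1/p)" using Alb S0 by (simp add: powr_mult)
      have e2: "(real M * S) powr (1/p) = real M powr (1/p) * S powr (1/p)" using S0 by (simp add: powr_mult)
      show ?thesis unfolding e1 e2 by (simp only: mult_ac)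
    qed
    also have "\<dots> \<le> 2 * (1 + 2 * q) * (\<alpha> ^ 3 * pnorm p X)"
    proof -
      have "A powr (1/p) \<le> A powr 1" using Alb p by (intro powr_mono) auto
      then have hA: "A powr (1/p) \<le> 1 + 2 * q" using Aub Alb by simp
      have e3: "real M * \<alpha> powr (-3 * p) * S = \<alpha> powr (-3 * p) * (real M * S)" by (simp only: mult_ac)
      have e4: "(\<alpha> powr (-3 * p)) powr (1/p) = \<alpha> powr (-3)"
      proof -
        have "(\<alpha> powr (-3 * p)) powr (1/p) = \<alpha> powr (-3 * p * (1/p))" by (rule powr_powr)
        also have "-3 * p * (1/p) = -3" using p by simp
        finally show ?thesis .
      qed
      have "(real M * \<alpha> powr (-3 * p) * S) powr (1/p) = \<alpha> powr (-3) * (real M * S) powr (1/p)"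
        unfolding e3 using S0 by (subst powr_mult) (auto simp only: e4)
      then have "\<alpha> powr (-3) * (real M * S) powr (1/p) \<le> pnorm p X" using pnlow by simp
      then have "\<alpha> ^ 3 * (\<alpha> powr (-3) * (real M * S) powr (1/p)) \<le> \<alpha> ^ 3 * pnorm p X"
        using a0 by (intro mult_left_mono) auto
      moreover have "\<alpha> ^ 3 * \<alpha> powr (-3) = 1"
      proof -
        have "\<alpha> powr (-3) = inverse (\<alpha> powr 3)" by (rule powr_minus)
        moreover have "\<alpha> powr 3 = \<alpha> ^ 3" using a0 by (simp add: powr_numeral)
        ultimately show ?thesis using a0 by simp
      qed
      ultimately have hM: "(real M * S) powr (1/p) \<le> \<alpha> ^ 3 * pnorm p X"
        by (simp only: mult.assoc[symmetric] mult_1)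
      have c1: "0 \<le> 2 * A powr (1/p)" by simp
      have "2 * A powr (1/p) \<le> 2 * (1 + 2 * q)" using hA by simp
      moreover have "0 \<le> (real M * S) powr (1/p)" by simp
      moreover have "0 \<le> 2 * (1 + 2 * q)" using q by simp
      ultimately show ?thesis using hM by (intro mult_mono) auto
    qed
    also have "\<dots> \<le> 6 * (p + q) * (\<alpha> ^ 4 * pnorm p X)"
    proof (rule mult_mono)
      show "2 * (1 + 2 * q) \<le> 6 * (p + q)" using p q by simp
      have "\<alpha> ^ 3 \<le> \<alpha> ^ 4" using a1 by (intro power_increasing) auto
      then show "\<alpha> ^ 3 * pnorm p X \<le> \<alpha> ^ 4 * pnorm p X" using pn0 by (rule mult_right_mono)
      show "0 \<le> 6 * (p + q)" using p q by simp
      show "0 \<le> \<alpha> ^ 3 * pnorm p X" using a0 pn0 by simp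
    qed
    finally show ?thesis by (simp only: mult.assoc)
  qed
  show ?thesis using lower upper unfolding X_def by blast
qed

end
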